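(* Let $0<d<\lambda<\frac12$ and let $N$ be an integer with $N>\lambda/(\lambda-d)$. Then asymptotically almost surely, for a random $m$-generator group at density $d$, there is no word of length $\lambda l$ which appears in $N$ different ways in the relators (i.e. as a subword at $N$ distinct locations among the cyclic words $r^{\pm1}$, $r$ a relator).
   Context: Random group at density $d$: $G=\langle s_1,\dots,s_m\mid r_1,\dots,r_n\rangle$, $m\ge2$, $n=\lfloor(2m-1)^{ld}\rfloor$, relators chosen independently and uniformly among cyclically reduced words of length exactly $l$; "asymptotically almost surely" means with probability tending to $1$ as $l\to\infty$. *)

theory Defs
  imports Complex_Main
begin

text \<open>Letters of the free group on generators s_0,...,s_(m-1): a pair (i, b) stands for
  s_i if b is True and for s_i^(-1) if b is False.\<close>
type_synonym letter = "nat \<times> bool"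

definition letter_inv :: "letter \<Rightarrow> letter" where
  "letter_inv a = (fst a, \<not> snd a)"

definition word_inv :: "letter list \<Rightarrow> letter list" where
  "word_inv w = rev (map letter_inv w)"

definition reduced :: "letter list \<Rightarrow> bool" where
  "reduced w \<longleftrightarrow> (\<forall>k. Suc k < length w \<longrightarrow> w ! Suc k \<noteq> letter_inv (w ! k))"

definition cyclically_reduced :: "letter list \<Rightarrow> bool" where
  "cyclically_reduced w \<longleftrightarrow> reduced w \<and> (w \<noteq> [] \<longrightarrow> last w \<noteq> letter_inv (hd w))"

definition CR_words :: "nat \<Rightarrow> nat \<Rightarrow> letter list set" where
  "CR_words m l = {w. length w = l \<and> (\<forall>a\<in>set w. fst a < m) \<and> cyclically_reduced w}"

text \<open>Sample space: n-tuples of relators, each a cyclically reduced word of length l.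
  Independent uniform choice = uniform distribution on this finite set.\<close>
definition relator_tuples :: "nat \<Rightarrow> nat \<Rightarrow> nat \<Rightarrow> letter list list set" where
  "relator_tuples m l n = {rs. length rs = n \<and> (\<forall>r\<in>set rs. r \<in> CR_words m l)}"

definition signed_word :: "letter list \<Rightarrow> bool \<Rightarrow> letter list" where
  "signed_word r e = (if e then r else word_inv r)"

definition cyc_subword :: "letter list \<Rightarrow> nat \<Rightarrow> nat \<Rightarrow> letter list" where
  "cyc_subword u j L = map (\<lambda>k. u ! ((j + k) mod length u)) [0..<L]"

definition locations :: "letter list list \<Rightarrow> letter list \<Rightarrow> (nat \<times> bool \<times> nat) set" where
  "locations rs w = {(i, e, j). i < length rs \<and> j < length (rs ! i) \<and>
      cyc_subword (signed_word (rs ! i) e) j (length w) = w}"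

definition repeated_word :: "nat \<Rightarrow> nat \<Rightarrow> letter list list \<Rightarrow> bool" where
  "repeated_word L N rs \<longleftrightarrow> (\<exists>w. length w = L \<and> card (locations rs w) \<ge> N)"

definition num_relators :: "nat \<Rightarrow> real \<Rightarrow> nat \<Rightarrow> nat" where
  "num_relators m d l = nat \<lfloor>(2 * real m - 1) powr (real l * d)\<rfloor>"

definition prob_event :: "nat \<Rightarrow> nat \<Rightarrow> nat \<Rightarrow> (letter list list \<Rightarrow> bool) \<Rightarrow> real" where
  "prob_event m l n P = real (card {rs \<in> relator_tuples m l n. P rs}) / real (card (relator_tuples m l n))"

end

theory Submission
  imports Defs "HOL-Library.FuncSet" "HOL-Real_Asymp.Real_Asymp"
begin


lemma linv_inv[simp]: "letter_inv (letter_inv a) = a"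
  by (simp add: letter_inv_def)
lemma linv_neq[simp]: "letter_inv a \<noteq> a"
  by (cases a) (simp add: letter_inv_def)
lemma linv_neq'[simp]: "a \<noteq> letter_inv a"
  using linv_neq by metis
lemma fst_linv[simp]: "fst (letter_inv a) = fst a"
  by (simp add: letter_inv_def)
lemma linv_eq_iff: "letter_inv a = b \<longleftrightarrow> a = letter_inv b"
  by auto

definition cyc :: "letter list \<Rightarrow> bool" where
  "cyc w \<longleftrightarrow> (\<forall>k<length w. w ! (Suc k mod length w) \<noteq> letter_inv (w ! k))"

lemma CR_cyc: "cyclically_reduced w \<longleftrightarrow> cyc w"
proof (cases "w = []")
  case True then show ?thesis by (simp add: cyc_def cyclically_reduced_def reduced_def)
next
  case False
  define l where "l = length w"
  have l: "l > 0" using False l_def by simp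
  have hd: "hd w = w ! 0" using False by (simp add: hd_conv_nth)
  have last: "last w = w ! (l - 1)" using False by (simp add: last_conv_nth l_def)
  show ?thesis
  proof
    assume H: "cyclically_reduced w"
    show "cyc w" unfolding cyc_def
    proof (intro allI impI)
      fix k assume k: "k < length w"
      show "w ! (Suc k mod length w) \<noteq> letter_inv (w ! k)"
      proof (cases "Suc k < l")
        case True then show ?thesis using H by (simp add: cyclically_reduced_def reduced_def l_def)
      next
        case False
        then have kk: "Suc k = l" using k l_def by auto
        then have "k = l - 1" "Suc k mod l = 0" by auto
        have "last w \<noteq> letter_inv (hd w)" using H \<open>w \<noteq> []\<close> by (simp add: cyclically_reduced_def)
        then have "w ! 0 \<noteq> letter_inv (w ! (l - 1))" using hd last by (metis linv_inv)
        then show ?thesis using \<open>k = l - 1\<close> \<open>Suc k mod l = 0\<close> l_def by simp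
      qed
    qed
  next
    assume H: "cyc w"
    have "reduced w" unfolding reduced_def
    proof (intro allI impI)
      fix k assume "Suc k < length w"
      then have "k < length w" "Suc k mod length w = Suc k" by auto
      then show "w ! Suc k \<noteq> letter_inv (w ! k)" using H unfolding cyc_def
        by metis
    qed
    moreover have "last w \<noteq> letter_inv (hd w)"
    proof -
      have "l - 1 < length w" using l l_def by simp
      from H[unfolded cyc_def, rule_format, OF this]
      have "w ! (Suc (l-1) mod l) \<noteq> letter_inv (w ! (l-1))" unfolding l_def by simp
      then have "w ! 0 \<noteq> letter_inv (w ! (l-1))" using l by simp
      then show ?thesis using hd last by (metis linv_inv)
    qed
    ultimately show "cyclically_reduced w" by (simp add: cyclically_reduced_def)
  qed
qed

lemma cyc_reduced: "cyc w \<Longrightarrow> reduced w"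
  using CR_cyc cyclically_reduced_def by blast

lemma cyc_rotate: assumes "cyc w" shows "cyc (rotate j w)"
  unfolding cyc_def
proof (intro allI impI)
  fix k assume k: "k < length (rotate j w)"
  define l where "l = length w"
  have kl: "k < l" using k unfolding l_def by simp
  then have l: "l > 0" by simp
  have sl: "Suc k mod l < l" using l by simp
  have "rotate j w ! (Suc k mod l) = w ! ((Suc k mod l + j) mod l)"
    using sl nth_rotate[of "Suc k mod l" w j] unfolding l_def by (simp add: add.commute)
  also have "(Suc k mod l + j) mod l = Suc ((k + j) mod l) mod l"
    by (simp add: mod_add_left_eq mod_Suc_eq)
  finally have e1: "rotate j w ! (Suc k mod l) = w ! (Suc ((k + j) mod l) mod l)" .
  have e2: "rotate j w ! k = w ! ((k + j) mod l)" using kl nth_rotate[of k w j] unfolding l_def by (simp add: add.commute)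
  have "(k + j) mod l < l" using l by simp
  then have "w ! (Suc ((k + j) mod l) mod l) \<noteq> letter_inv (w ! ((k + j) mod l))"
    using assms unfolding cyc_def l_def by blast
  then show "rotate j w ! (Suc k mod length (rotate j w)) \<noteq> letter_inv (rotate j w ! k)"
    using e1 e2 unfolding l_def by simp
qed

lemma word_inv_nth: "k < length w \<Longrightarrow> word_inv w ! k = letter_inv (w ! (length w - 1 - k))"
  by (simp add: word_inv_def rev_nth)
lemma length_word_inv[simp]: "length (word_inv w) = length w"
  by (simp add: word_inv_def)
lemma word_inv_inv[simp]: "word_inv (word_inv w) = w"
  by (simp add: word_inv_def rev_map o_def)
lemma set_word_inv: "set (word_inv w) = letter_inv ` set w"
  by (simp add: word_inv_def)

lemma cyc_word_inv: assumes "cyc w" shows "cyc (word_inv w)"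
  unfolding cyc_def
proof (intro allI impI)
  fix k assume k: "k < length (word_inv w)"
  define l where "l = length w"
  have kl: "k < l" using k l_def by simp
  show "word_inv w ! (Suc k mod length (word_inv w)) \<noteq> letter_inv (word_inv w ! k)"
  proof (cases "Suc k < l")
    case True
    have a: "word_inv w ! Suc k = letter_inv (w ! (l - 2 - k))" using True
      by (simp add: word_inv_nth l_def)
    have b: "word_inv w ! k = letter_inv (w ! (l - 1 - k))" using kl by (simp add: word_inv_nth l_def)
    have c: "Suc (l - 2 - k) mod l = l - 1 - k" using True by simp
    have "l - 2 - k < length w" using True l_def by simp
    then have "w ! (Suc (l - 2 - k) mod l) \<noteq> letter_inv (w ! (l - 2 - k))"
      using assms unfolding cyc_def l_def by blast
    then have "w ! (l - 1 - k) \<noteq> letter_inv (w ! (l - 2 - k))" using c by simp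
    then have "letter_inv (w ! (l - 2 - k)) \<noteq> w ! (l - 1 - k)"
      by (metis linv_inv)
    then show ?thesis using a b True l_def by simp
  next
    case False
    then have kk: "k = l - 1" using kl by simp
    have a: "word_inv w ! 0 = letter_inv (w ! (l - 1))" using kl word_inv_nth[of 0 w] by (cases w) (auto simp: l_def)
    have b: "word_inv w ! k = letter_inv (w ! 0)" using kl kk by (simp add: word_inv_nth l_def)
    have "w ! (Suc (l - 1) mod l) \<noteq> letter_inv (w ! (l - 1))"
      using assms kl unfolding cyc_def l_def by auto
    then have "w ! 0 \<noteq> letter_inv (w ! (l - 1))" using kl by simp
    then have "letter_inv (w ! (l - 1)) \<noteq> w ! 0" by (metis linv_inv)
    moreover have "Suc k mod length (word_inv w) = 0" using kk kl l_def by (metis Suc_diff_1 length_word_inv less_nat_zero_code mod_self not_gr_zero)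
    ultimately show ?thesis using a b by simp
  qed
qed


lemma card_lists_prod:
  "card {rs. length rs = n \<and> (\<forall>p<n. rs ! p \<in> C p)} = (\<Prod>p<n. card (C p))"
proof (induction n)
  case 0
  have "{rs. length rs = 0 \<and> (\<forall>p<0. rs ! p \<in> C p)} = {[]}" by auto
  then show ?case by simp
next
  case (Suc n)
  let ?S = "\<lambda>n. {rs. length rs = n \<and> (\<forall>p<n. rs ! p \<in> C p)}"
  have eq: "?S (Suc n) = (\<lambda>(xs, x). xs @ [x]) ` (?S n \<times> C n)"
  proof (intro equalityI subsetI)
    fix rs assume rs: "rs \<in> ?S (Suc n)"
    then have "rs = take n rs @ [rs ! n]"
      by (metis (mono_tags, lifting) lessI mem_Collect_eq take_Suc_conv_app_nth take_all_iff order.refl)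
    moreover have "take n rs \<in> ?S n" using rs by auto
    moreover have "rs ! n \<in> C n" using rs by auto
    ultimately show "rs \<in> (\<lambda>(xs, x). xs @ [x]) ` (?S n \<times> C n)"
      by (metis (no_types, lifting) SigmaI case_prod_conv image_eqI)
  next
    fix rs assume "rs \<in> (\<lambda>(xs, x). xs @ [x]) ` (?S n \<times> C n)"
    then obtain xs x where "rs = xs @ [x]" "xs \<in> ?S n" "x \<in> C n" by auto
    then show "rs \<in> ?S (Suc n)"
      by (auto simp: nth_append less_Suc_eq)
  qed
  have inj: "inj_on (\<lambda>(xs, x). xs @ [x]) (?S n \<times> C n)"
    by (auto simp: inj_on_def)
  show ?case unfolding eq card_image[OF inj] card_cartesian_product Suc.IH by simp
qed

definition RW :: "nat \<Rightarrow> nat \<Rightarrow> nat set \<Rightarrow> (nat \<Rightarrow> nat) \<Rightarrow> (nat \<Rightarrow> letter \<Rightarrow> letter) \<Rightarrow> letter list set" where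
  "RW m t D g f = {w. length w = t \<and> reduced w \<and> (\<forall>a\<in>set w. fst a < m) \<and>
      (\<forall>d\<in>D. d < t \<longrightarrow> w ! d = f d (w ! g d))}"

lemma letters_eq: "{a::letter. fst a < m} = {..<m} \<times> UNIV" by auto

lemma card_letters: "card {a::letter. fst a < m} = 2 * m"
  unfolding letters_eq by (simp add: card_cartesian_product)

lemma finite_letters: "finite {a::letter. fst a < m}"
  unfolding letters_eq by simp

lemma card_letters_minus: "fst x < m \<Longrightarrow> card {a::letter. fst a < m \<and> a \<noteq> x} = 2 * m - 1"
proof -
  assume "fst x < m"
  have "{a::letter. fst a < m \<and> a \<noteq> x} = {a. fst a < m} - {x}" by auto
  then show ?thesis using \<open>fst x < m\<close> card_letters[of m] finite_letters[of m] by simp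
qed

lemma finite_RW: "finite (RW m t D g f)"
proof -
  have "RW m t D g f \<subseteq> {w. set w \<subseteq> {a. fst a < m} \<and> length w = t}"
    unfolding RW_def by auto
  moreover have "finite {w. set w \<subseteq> {a::letter. fst a < m} \<and> length w = t}"
    using finite_lists_length_eq[OF finite_letters] by simp
  ultimately show ?thesis using finite_subset by blast
qed

lemma reduced_take: "reduced w \<Longrightarrow> reduced (take n w)"
  unfolding reduced_def by simp

lemma RW_step:
  assumes "w \<in> RW m (Suc t) D g f" and gD: "\<forall>d\<in>D. g d < d" and t: "t \<ge> 1"
  shows "take t w \<in> RW m t D g f \<and>
     w ! t \<in> (if t \<in> D then {f t (take t w ! g t)} else {a. fst a < m \<and> a \<noteq> letter_inv (last (take t w))})
     \<and> w = take t w @ [w ! t]"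
proof -
  have len: "length w = Suc t" and red: "reduced w" and lt: "\<forall>a\<in>set w. fst a < m"
    and con: "\<forall>d\<in>D. d < Suc t \<longrightarrow> w ! d = f d (w ! g d)"
    using assms(1) unfolding RW_def by auto
  have A: "take t w \<in> RW m t D g f"
  proof -
    have 1: "length (take t w) = t" using len by simp
    have 2: "reduced (take t w)" using reduced_take[OF red] .
    have 3: "\<forall>a\<in>set (take t w). fst a < m" using lt set_take_subset by fast
    have 4: "\<forall>d\<in>D. d < t \<longrightarrow> take t w ! d = f d (take t w ! g d)"
    proof (intro ballI impI)
      fix d assume d: "d \<in> D" "d < t"
      have gd: "g d < t" using gD d by (meson order.strict_trans)
      have "w ! d = f d (w ! g d)" using con d less_SucI by blast
      then show "take t w ! d = f d (take t w ! g d)" using d(2) gd by (simp only: nth_take)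
    qed
    show ?thesis unfolding RW_def mem_Collect_eq using 1 2 3 4 by (intro conjI)
  qed
  have wt: "w = take t w @ [w ! t]"
  proof -
    have e1: "take (Suc t) w = take t w @ [w ! t]" by (rule take_Suc_conv_app_nth) (simp add: len)
    have e2: "take (Suc t) w = w" using len by simp
    show ?thesis using e1 e2 by simp
  qed
  have B: "w ! t \<in> (if t \<in> D then {f t (take t w ! g t)} else {a. fst a < m \<and> a \<noteq> letter_inv (last (take t w))})"
  proof (cases "t \<in> D")
    case True
    have "g t < t" using gD True by blast
    moreover have "w ! t = f t (w ! g t)" using con True lessI by blast
    ultimately show ?thesis using True by simp
  next
    case False
    have "last (take t w) = w ! (t - 1)" using len t by (subst last_conv_nth) auto
    moreover have "w ! Suc (t - 1) \<noteq> letter_inv (w ! (t - 1))"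
      using red[unfolded reduced_def, rule_format, of "t - 1"] len t by simp
    moreover have "fst (w ! t) < m" using lt len by simp
    moreover have "Suc (t - 1) = t" using t by simp
    ultimately show ?thesis using False by simp
  qed
  show ?thesis using A B wt by blast
qed


lemma RW_bound:
  assumes gD: "\<forall>d\<in>D. g d < d" and t: "t \<ge> 1" and m: "m \<ge> 1"
  shows "card (RW m t D g f) * (2*m-1) ^ card (D \<inter> {..<t}) \<le> 2 * m * (2*m-1) ^ (t - 1)"
  using t
proof (induction t rule: dec_induct)
  case base
  have "0 \<notin> D" using gD by auto
  then have "D \<inter> {..<1} = {}" by auto
  moreover have "RW m 1 D g f \<subseteq> (\<lambda>a. [a]) ` {a. fst a < m}"
  proof
    fix w assume "w \<in> RW m 1 D g f"
    then have "length w = 1" "\<forall>a\<in>set w. fst a < m" unfolding RW_def by auto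
    then obtain a where "w = [a]" by (metis One_nat_def length_0_conv length_Suc_conv)
    with \<open>\<forall>a\<in>set w. fst a < m\<close> show "w \<in> (\<lambda>a. [a]) ` {a. fst a < m}" by auto
  qed
  then have "card (RW m 1 D g f) \<le> 2 * m"
    using card_mono[OF finite_imageI[OF finite_letters] \<open>RW m 1 D g f \<subseteq> _\<close>]
      card_image_le[OF finite_letters, of "\<lambda>a. [a]" m] card_letters[of m] by linarith
  ultimately show ?case by simp
next
  case (step t)
  let ?A = "\<lambda>w. if t \<in> D then {f t (w ! g t)} else {a. fst a < m \<and> a \<noteq> letter_inv (last w)}"
  let ?c = "if t \<in> D then 1 else 2*m-1"
  have sub: "RW m (Suc t) D g f \<subseteq> (\<lambda>(w, a). w @ [a]) ` Sigma (RW m t D g f) ?A"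
  proof
    fix w assume "w \<in> RW m (Suc t) D g f"
    from RW_step[OF this gD step(1)]
    have s1: "(take t w, w ! t) \<in> Sigma (RW m t D g f) ?A" and wt: "w = take t w @ [w ! t]" by auto
    have "(\<lambda>(w, a). w @ [a]) (take t w, w ! t) \<in> (\<lambda>(w, a). w @ [a]) ` Sigma (RW m t D g f) ?A"
      using s1 by (rule imageI)
    then show "w \<in> (\<lambda>(w, a). w @ [a]) ` Sigma (RW m t D g f) ?A" using wt by simp
  qed
  have cardA: "card (?A w) \<le> ?c" if "w \<in> RW m t D g f" for w
  proof (cases "t \<in> D")
    case False
    have "w \<noteq> []" using that step(1) unfolding RW_def by auto
    then have "last w \<in> set w" by simp
    then have "fst (letter_inv (last w)) < m" using that unfolding RW_def by auto
    then show ?thesis using False card_letters_minus by simp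
  qed simp
  have finA: "finite (?A w)" for w using finite_letters[of m] by auto
  have finS: "finite (Sigma (RW m t D g f) ?A)" using finite_RW finA by blast
  have "card (RW m (Suc t) D g f) \<le> card (Sigma (RW m t D g f) ?A)"
    using card_mono[OF finite_imageI[OF finS] sub]
      card_image_le[OF finS, of "\<lambda>(w, a). w @ [a]"]
    by linarith
  also have "\<dots> = (\<Sum>w\<in>RW m t D g f. card (?A w))"
    by (rule card_SigmaI) (auto simp: finite_RW finA)
  also have "\<dots> \<le> (\<Sum>w\<in>RW m t D g f. ?c)" by (rule sum_mono) (use cardA in auto)
  also have "\<dots> = card (RW m t D g f) * ?c" by simp
  finally have C: "card (RW m (Suc t) D g f) \<le> card (RW m t D g f) * ?c" .
  show ?case
  proof (cases "t \<in> D")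
    case True
    have "D \<inter> {..<Suc t} = insert t (D \<inter> {..<t})" using True by auto
    then have cd: "card (D \<inter> {..<Suc t}) = Suc (card (D \<inter> {..<t}))" by simp
    have "card (RW m (Suc t) D g f) * (2*m-1) ^ card (D \<inter> {..<Suc t})
        \<le> card (RW m t D g f) * (2*m-1) ^ card (D \<inter> {..<t}) * (2*m-1)"
      using C True unfolding cd by (simp add: mult.commute mult.left_commute)
    also have "\<dots> \<le> 2 * m * (2*m-1) ^ (t - 1) * (2*m-1)" using step(3) by simp
    also have "\<dots> = 2 * m * (2*m-1) ^ (Suc t - 1)" using step(1)
      by (simp add: power_Suc2[symmetric] Suc_diff_1 del: power_Suc)
    finally show ?thesis .
  next
    case False
    have "D \<inter> {..<Suc t} = D \<inter> {..<t}" using False by (auto simp: less_Suc_eq)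
    then have "card (RW m (Suc t) D g f) * (2*m-1) ^ card (D \<inter> {..<Suc t})
        \<le> card (RW m t D g f) * (2*m-1) ^ card (D \<inter> {..<t}) * (2*m-1)"
      using C False by (simp add: mult.commute mult.left_commute)
    also have "\<dots> \<le> 2 * m * (2*m-1) ^ (t - 1) * (2*m-1)" using step(3) by simp
    also have "\<dots> = 2 * m * (2*m-1) ^ (Suc t - 1)" using step(1)
      by (simp add: power_Suc2[symmetric] Suc_diff_1 del: power_Suc)
    finally show ?thesis .
  qed
qed


lemma reduced_snoc:
  assumes "reduced w" "w \<noteq> []" "a \<noteq> letter_inv (last w)"
  shows "reduced (w @ [a])"
  unfolding reduced_def
proof (intro allI impI)
  fix k assume k: "Suc k < length (w @ [a])"
  show "(w @ [a]) ! Suc k \<noteq> letter_inv ((w @ [a]) ! k)"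
  proof (cases "Suc k < length w")
    case True
    then show ?thesis using assms(1) unfolding reduced_def by (simp add: nth_append)
  next
    case False
    then have sk: "Suc k = length w" using k by simp
    have "length w - 1 = k" using sk by simp
    then have "last w = w ! k" using assms(2) by (simp add: last_conv_nth)
    then show ?thesis using sk assms(3) by (simp add: nth_append)
  qed
qed

definition HW :: "nat \<Rightarrow> nat \<Rightarrow> letter list set" where
  "HW m t = {w. length w = t \<and> reduced w \<and> (\<forall>a\<in>set w. fst a < m) \<and> hd w = (0, True)}"

lemma finite_HW: "finite (HW m t)"
proof -
  have "HW m t \<subseteq> {w. set w \<subseteq> {a. fst a < m} \<and> length w = t}"
    unfolding HW_def by auto
  moreover have "finite {w. set w \<subseteq> {a::letter. fst a < m} \<and> length w = t}"
    using finite_lists_length_eq[OF finite_letters] by simp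
  ultimately show ?thesis using finite_subset by blast
qed

lemma finite_CR: "finite (CR_words m l)"
proof -
  have "CR_words m l \<subseteq> {w. set w \<subseteq> {a. fst a < m} \<and> length w = l}"
    unfolding CR_words_def by auto
  moreover have "finite {w. set w \<subseteq> {a::letter. fst a < m} \<and> length w = l}"
    using finite_lists_length_eq[OF finite_letters] by simp
  ultimately show ?thesis using finite_subset by blast
qed

lemma HW_card:
  assumes t: "t \<ge> 1" and m: "m \<ge> 1"
  shows "(2*m-1) ^ (t - 1) \<le> card (HW m t)"
  using t
proof (induction t rule: dec_induct)
  case base
  have "[(0, True)] \<in> HW m 1" unfolding HW_def reduced_def using m by auto
  then have "HW m 1 \<noteq> {}" by blast
  then have "card (HW m 1) \<ge> 1" using finite_HW by (simp add: Suc_leI card_gt_0_iff)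
  then show ?case by simp
next
  case (step t)
  let ?A = "\<lambda>w. {a. fst a < m \<and> a \<noteq> letter_inv (last w)}"
  have finA: "finite (?A w)" for w using finite_letters[of m] by auto
  have finS: "finite (Sigma (HW m t) ?A)" using finite_HW finA by blast
  have sub: "(\<lambda>(w, a). w @ [a]) ` Sigma (HW m t) ?A \<subseteq> HW m (Suc t)"
  proof
    fix x assume "x \<in> (\<lambda>(w, a). w @ [a]) ` Sigma (HW m t) ?A"
    then obtain w a where x: "x = w @ [a]" and w: "w \<in> HW m t" and a: "a \<in> ?A w" by auto
    have ne: "w \<noteq> []" using w step(1) unfolding HW_def by auto
    have "reduced w" using w unfolding HW_def by auto
    then have "reduced (w @ [a])" using reduced_snoc ne a by blast
    then show "x \<in> HW m (Suc t)" using w a ne x unfolding HW_def by auto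
  qed
  have inj: "inj_on (\<lambda>(w, a). w @ [a]) (Sigma (HW m t) ?A)" by (auto simp: inj_on_def)
  have cardA: "card (?A w) = 2*m-1" if "w \<in> HW m t" for w
  proof -
    have "w \<noteq> []" using that step(1) unfolding HW_def by auto
    then have "last w \<in> set w" by simp
    then have "fst (letter_inv (last w)) < m" using that unfolding HW_def by auto
    then show ?thesis using card_letters_minus by simp
  qed
  have "card (HW m t) * (2*m-1) = (\<Sum>w\<in>HW m t. card (?A w))" using cardA by simp
  also have "\<dots> = card (Sigma (HW m t) ?A)" by (rule card_SigmaI[symmetric]) (auto simp: finite_HW finA)
  also have "\<dots> = card ((\<lambda>(w, a). w @ [a]) ` Sigma (HW m t) ?A)" using card_image[OF inj] by simp
  also have "\<dots> \<le> card (HW m (Suc t))" using card_mono[OF finite_HW sub] .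
  finally have "card (HW m t) * (2*m-1) \<le> card (HW m (Suc t))" .
  moreover have "(2*m-1) ^ (Suc t - 1) = (2*m-1) ^ (t - 1) * (2*m-1)" using step(1)
    by (simp add: power_Suc2[symmetric] Suc_diff_1 del: power_Suc)
  moreover have "(2*m-1) ^ (t - 1) * (2*m-1) \<le> card (HW m t) * (2*m-1)" using step(3) by simp
  ultimately show ?case by linarith
qed

lemma CR_card:
  assumes l: "l \<ge> 2" and m: "m \<ge> 2"
  shows "(2*m-1) ^ (l - 2) \<le> card (CR_words m l)"
proof -
  define pick where "pick w = (if letter_inv (last w) = (1, True) then (1::nat, False) else (1, True))" for w
  have pk: "pick w \<noteq> letter_inv (last w)" "pick w \<noteq> (0, False)" "fst (pick w) < m" for w
    using m unfolding pick_def by auto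
  have sub: "(\<lambda>w. w @ [pick w]) ` HW m (l - 1) \<subseteq> CR_words m l"
  proof
    fix x assume "x \<in> (\<lambda>w. w @ [pick w]) ` HW m (l - 1)"
    then obtain w where x: "x = w @ [pick w]" and w: "w \<in> HW m (l - 1)" by auto
    have ne: "w \<noteq> []" using w l unfolding HW_def by auto
    have "reduced w" using w unfolding HW_def by auto
    then have red: "reduced (w @ [pick w])" using reduced_snoc ne pk(1) by blast
    have hd: "hd (w @ [pick w]) = (0, True)" using w ne unfolding HW_def by auto
    have "last (w @ [pick w]) \<noteq> letter_inv (hd (w @ [pick w]))" using hd pk(2)
      by (simp add: letter_inv_def)
    then have "cyclically_reduced x" using red x by (simp add: cyclically_reduced_def)
    then show "x \<in> CR_words m l" using w l x pk(3) unfolding HW_def CR_words_def by auto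
  qed
  have inj: "inj_on (\<lambda>w. w @ [pick w]) (HW m (l - 1))" by (auto simp: inj_on_def)
  have "(2*m-1) ^ (l - 2) = (2*m-1) ^ ((l - 1) - 1)" by (simp add: numeral_2_eq_2)
  also have "\<dots> \<le> card (HW m (l - 1))" using HW_card[of "l - 1" m] l m by simp
  also have "\<dots> = card ((\<lambda>w. w @ [pick w]) ` HW m (l - 1))" using card_image[OF inj] by simp
  also have "\<dots> \<le> card (CR_words m l)" using card_mono[OF finite_CR sub] .
  finally show ?thesis .
qed


lemma rotate_inj: "rotate n xs = rotate n ys \<Longrightarrow> xs = ys"
  by (induction n) (auto dest: injD[OF inj_rotate1])

lemma seg_rotate: "L \<le> length u \<Longrightarrow> cyc_subword u j L = take L (rotate j u)"
  by (rule nth_equalityI) (auto simp: cyc_subword_def nth_rotate add.commute)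

lemma inj_RW_bound:
  assumes inj: "inj_on \<phi> S" and sub: "\<phi> ` S \<subseteq> RW m l D g f" and gD: "\<forall>d\<in>D. g d < d"
    and Dl: "D \<subseteq> {..<l}" and l: "l \<ge> 1" and m: "m \<ge> 1"
  shows "card S * (2*m-1) ^ card D \<le> 2 * m * (2*m-1) ^ (l - 1)"
proof -
  have "card S = card (\<phi> ` S)" using card_image[OF inj] by simp
  also have "\<dots> \<le> card (RW m l D g f)" using card_mono[OF finite_RW sub] .
  finally have c: "card S \<le> card (RW m l D g f)" .
  have "D \<inter> {..<l} = D" using Dl by auto
  then have "card (RW m l D g f) * (2*m-1) ^ card D \<le> 2 * m * (2*m-1) ^ (l - 1)"
    using RW_bound[OF gD l m] by simp
  moreover have "card S * (2*m-1) ^ card D \<le> card (RW m l D g f) * (2*m-1) ^ card D"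
    using c by simp
  ultimately show ?thesis by linarith
qed

definition seg :: "nat \<Rightarrow> bool \<Rightarrow> nat \<Rightarrow> letter list \<Rightarrow> letter list" where
  "seg L e j r = cyc_subword (signed_word r e) j L"

lemma CR_props:
  assumes "r \<in> CR_words m l"
  shows "length r = l" "cyc r" "\<forall>a\<in>set r. fst a < m"
  using assms unfolding CR_words_def by (auto simp: CR_cyc)

lemma signed_props:
  assumes "r \<in> CR_words m l"
  shows "length (signed_word r e) = l" "cyc (signed_word r e)" "\<forall>a\<in>set (signed_word r e). fst a < m"
  using CR_props[OF assms] cyc_word_inv by (auto simp: signed_word_def set_word_inv)

lemma signed_inj: "signed_word r e = signed_word r' e \<Longrightarrow> r = r'"
  by (metis signed_word_def word_inv_inv)

lemma rot_props:
  assumes "length s = l" "cyc s" "\<forall>a\<in>set s. fst a < m"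
  shows "length (rotate j s) = l" "reduced (rotate j s)" "\<forall>a\<in>set (rotate j s). fst a < m"
  using assms cyc_rotate cyc_reduced by auto

lemma seg_bound:
  assumes L: "1 \<le> L" "L \<le> l" and m: "m \<ge> 1"
  shows "card {r \<in> CR_words m l. seg L e j r = u} * (2*m-1) ^ (L - 1) \<le> 2 * m * (2*m-1) ^ (l - 1)"
proof -
  let ?S = "{r \<in> CR_words m l. seg L e j r = u}"
  let ?\<phi> = "\<lambda>r. rotate j (signed_word r e)"
  have inj: "inj_on ?\<phi> ?S" by (auto simp: inj_on_def dest: rotate_inj signed_inj)
  have sub: "?\<phi> ` ?S \<subseteq> RW m l {1..<L} (\<lambda>d. 0) (\<lambda>d x. u ! d)"
  proof
    fix x assume "x \<in> ?\<phi> ` ?S"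
    then obtain r where x: "x = ?\<phi> r" and r: "r \<in> CR_words m l" and su: "seg L e j r = u" by auto
    note sp = signed_props[OF r, of e]
    note rp = rot_props[OF sp, of j]
    have tk: "take L x = u" using su seg_rotate[of L "signed_word r e" j] sp(1) L x
      by (simp add: seg_def)
    have "x ! d = u ! d" if "d < L" for d using tk that by auto
    then show "x \<in> RW m l {1..<L} (\<lambda>d. 0) (\<lambda>d x. u ! d)"
      unfolding RW_def using rp x by auto
  qed
  have "card ?S * (2*m-1) ^ card {1..<L} \<le> 2 * m * (2*m-1) ^ (l - 1)"
    by (rule inj_RW_bound[OF inj sub]) (use L m in auto)
  then show ?thesis by simp
qed


lemma ar1: "(j::nat) < l \<Longrightarrow> j' < l \<Longrightarrow> ((j' + l - j) mod l + j) mod l = j'"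
  by (simp add: mod_add_left_eq)

lemma ar2: assumes "(j::nat) < l" "j' < l" "j \<noteq> j'" shows "(j' + l - j) mod l + (j + l - j') mod l = l"
proof (cases "j < j'")
  case True
  have e: "j' + l - j = (j' - j) + l" using True by simp
  have 1: "(j' + l - j) mod l = j' - j" unfolding e mod_add_self2 using assms by simp
  have 2: "(j + l - j') mod l = j + l - j'" using True assms by simp
  show ?thesis using 1 2 True assms by simp
next
  case False
  then have F: "j' < j" using assms by simp
  have e: "j + l - j' = (j - j') + l" using F by simp
  have 1: "(j + l - j') mod l = j - j'" unfolding e mod_add_self2 using assms by simp
  have 2: "(j' + l - j) mod l = j' + l - j" using F assms by simp
  show ?thesis using 1 2 F assms by simp
qed

lemma ar3: assumes "(j::nat) < l" "j' < l" "k < l"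
  shows "((l - 1 - ((j' + k) mod l)) + l - j) mod l = (3*l - 1 - j - j' - k) mod l"
proof (cases "j' + k < l")
  case True
  then have "(j' + k) mod l = j' + k" by simp
  moreover have e: "3*l - 1 - j - j' - k = (l - 1 - (j' + k) + l - j) + l" using True assms by simp
  ultimately show ?thesis unfolding e mod_add_self2 by simp
next
  case False
  then have "(j' + k) mod l = j' + k - l" using assms by (simp add: le_mod_geq)
  moreover have "3*l - 1 - j - j' - k = (l - 1 - (j' + k - l) + l - j)" using False assms by simp
  ultimately show ?thesis by simp
qed

lemma ar4: assumes "k \<le> (A::nat)" shows "(A - (A - k) mod l) mod l = k mod l"
proof -
  define x where "x = A - k"
  have "x div l * l + x mod l = x" by simp
  then have "A - x mod l = x div l * l + k" using assms unfolding x_def by linarith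
  then show ?thesis unfolding x_def[symmetric] by simp
qed

lemma ar5: assumes "(A - k) mod l = Suc k2" "Suc k \<le> (A::nat)" shows "(A - Suc k) mod l = k2"
proof -
  have "A - k = Suc (A - Suc k)" using assms by simp
  then have "Suc (A - Suc k) mod l = Suc k2" using assms by simp
  then show ?thesis by (simp add: mod_Suc split: if_splits)
qed

lemma descent:
  assumes step: "\<forall>k1 k2. k1 < L \<longrightarrow> P k1 = Suc k2 \<longrightarrow> P (Suc k1) = k2"
  shows "k1 \<le> k2 \<Longrightarrow> k2 < L \<Longrightarrow> P k1 = k2 \<Longrightarrow> \<exists>k<L. P k = k \<or> (Suc k < L \<and> P k = Suc k)"
proof (induction "k2 - k1" arbitrary: k1 k2 rule: less_induct)
  case less
  show ?case
  proof (cases "k2 \<le> Suc k1")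
    case True
    then have "k2 = k1 \<or> k2 = Suc k1" using less.prems by auto
    then show ?thesis
    proof
      assume "k2 = k1" then show ?thesis using less.prems by auto
    next
      assume "k2 = Suc k1"
      then have "k1 < L \<and> (P k1 = k1 \<or> (Suc k1 < L \<and> P k1 = Suc k1))" using less.prems by auto
      then show ?thesis by blast
    qed
  next
    case False
    then obtain k2' where k2: "k2 = Suc k2'" by (cases k2) auto
    have "P (Suc k1) = k2'" using step less.prems k2 by auto
    moreover have "k2' - Suc k1 < k2 - k1" using False k2 by simp
    moreover have "Suc k1 \<le> k2'" "k2' < L" using False k2 less.prems by auto
    ultimately show ?thesis using less.hyps by blast
  qed
qed



lemma TT_aux:
  assumes j: "j < l" "j' < l" "j \<noteq> j'" and L: "1 \<le> L" and pL: "(j' + l - j) mod l + L \<le> l"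
    and m: "m \<ge> 1"
  shows "card {r \<in> CR_words m l. cyc_subword r j L = cyc_subword r j' L} * (2*m-1) ^ L
         \<le> 2 * m * (2*m-1) ^ (l - 1)"
proof -
  define p where "p = (j' + l - j) mod l"
  have p0: "p > 0"
  proof (cases "j < j'")
    case True
    have e: "j' + l - j = (j' - j) + l" using True by simp
    have "p = j' - j" unfolding p_def e mod_add_self2 using j by simp
    then show ?thesis using True by simp
  next
    case False
    then have F: "j' < j" using j by simp
    have "p = j' + l - j" unfolding p_def using F j by simp
    then show ?thesis using F j by simp
  qed
  let ?S = "{r \<in> CR_words m l. cyc_subword r j L = cyc_subword r j' L}"
  have Ll: "L \<le> l" using pL by simp
  have inj: "inj_on (rotate j) ?S" by (auto simp: inj_on_def dest: rotate_inj)
  have sub: "rotate j ` ?S \<subseteq> RW m l {p..<p+L} (\<lambda>d. d - p) (\<lambda>d x. x)"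
  proof
    fix x assume "x \<in> rotate j ` ?S"
    then obtain r where x: "x = rotate j r" and r: "r \<in> CR_words m l"
      and eq: "cyc_subword r j L = cyc_subword r j' L" by auto
    note cp = CR_props[OF r]
    note rp = rot_props[OF cp, of j]
    have rr: "rotate j' r = rotate p x"
    proof -
      have "rotate p x = rotate (p + j) r" by (simp add: x rotate_rotate)
      also have "\<dots> = rotate ((p + j) mod l) r" using cp(1) rotate_conv_mod[of "p + j" r] by simp
      also have "(p + j) mod l = j'" unfolding p_def using ar1 j by blast
      finally show ?thesis by simp
    qed
    have tk: "take L x = take L (rotate p x)"
      using eq seg_rotate[of L r j] seg_rotate[of L r j'] cp(1) Ll x rr by simp
    have con: "x ! d = x ! (d - p)" if "d \<in> {p..<p+L}" for d
    proof -
      have k: "d - p < L" "d < l" using that pL p_def by auto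
      have "x ! (d - p) = take L x ! (d - p)" using k by simp
      also have "\<dots> = take L (rotate p x) ! (d - p)" using tk by simp
      also have "\<dots> = rotate p x ! (d - p)" using k by simp
      also have "\<dots> = x ! ((p + (d - p)) mod l)" using k rp(1) x nth_rotate[of "d - p" x p] by simp
      also have "(p + (d - p)) mod l = d" using k that by simp
      finally show ?thesis by simp
    qed
    have con': "\<forall>d\<in>{p..<p+L}. d < l \<longrightarrow> x ! d = x ! (d - p)" using con by blast
    show "x \<in> RW m l {p..<p+L} (\<lambda>d. d - p) (\<lambda>d x. x)"
      unfolding RW_def mem_Collect_eq using rp con' x by (intro conjI) auto
  qed
  have "card ?S * (2*m-1) ^ card {p..<p+L} \<le> 2 * m * (2*m-1) ^ (l - 1)"
    by (rule inj_RW_bound[OF inj sub]) (use p0 pL p_def j m in auto)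
  then show ?thesis by simp
qed



lemma TT_bound:
  assumes j: "j < l" "j' < l" "j \<noteq> j'" and L: "1 \<le> L" "2 * L \<le> l" and m: "m \<ge> 1"
  shows "card {r \<in> CR_words m l. cyc_subword r j L = cyc_subword r j' L} * (2*m-1) ^ L
         \<le> 2 * m * (2*m-1) ^ (l - 1)"
proof (cases "(j' + l - j) mod l + L \<le> l")
  case True
  then show ?thesis using TT_aux[OF j L(1) True m] by simp
next
  case False
  have "(j + l - j') mod l + L \<le> l" using ar2[OF j] False L by linarith
  then have "card {r \<in> CR_words m l. cyc_subword r j' L = cyc_subword r j L} * (2*m-1) ^ L
         \<le> 2 * m * (2*m-1) ^ (l - 1)" using TT_aux[of j' l j L m] j L m by auto
  moreover have "{r \<in> CR_words m l. cyc_subword r j' L = cyc_subword r j L} =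
     {r \<in> CR_words m l. cyc_subword r j L = cyc_subword r j' L}" by auto
  ultimately show ?thesis by simp
qed


lemma TF_bound:
  assumes j: "j < l" "j' < l" and L: "1 \<le> L" "2 * L \<le> l" and m: "m \<ge> 1"
  shows "card {r \<in> CR_words m l. cyc_subword r j L = cyc_subword (word_inv r) j' L} * (2*m-1) ^ L
         \<le> 2 * m * (2*m-1) ^ (l - 1)"
proof -
  define A where "A = 3*l - 1 - j - j'"
  define P where "P k = (A - k) mod l" for k
  let ?S = "{r \<in> CR_words m l. cyc_subword r j L = cyc_subword (word_inv r) j' L}"
  have l0: "l > 0" using j by simp
  have Al: "l < A" unfolding A_def using j by simp
  have Ll: "L < l" using L by simp
  have Pl: "P k < l" for k unfolding P_def using l0 by simp
  have PP: "P (P k) = k" if "k < l" for k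
  proof -
    have "P (P k) = (A - (A - k) mod l) mod l" unfolding P_def ..
    also have "\<dots> = k mod l" by (rule ar4) (use that Al in simp)
    finally show ?thesis using that by simp
  qed
  have Pstep: "\<forall>k1 k2. k1 < L \<longrightarrow> P k1 = Suc k2 \<longrightarrow> P (Suc k1) = k2"
    unfolding P_def using ar5 Al Ll by (metis Suc_leI less_trans)
  have key: "rotate j r ! k = letter_inv (rotate j r ! P k)" if r: "r \<in> ?S" and k: "k < L" for r k
  proof -
    have rl: "length r = l" using r unfolding CR_words_def by auto
    define s where "s = rotate j r"
    have kl: "k < l" using k Ll by simp
    have "s ! k = take L s ! k" using k by simp
    also have "\<dots> = cyc_subword r j L ! k" using seg_rotate[of L r j] rl Ll s_def by simp
    also have "\<dots> = cyc_subword (word_inv r) j' L ! k" using r by simp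
    also have "\<dots> = word_inv r ! ((j' + k) mod l)" using k rl by (simp add: cyc_subword_def)
    also have "\<dots> = letter_inv (r ! (l - 1 - (j' + k) mod l))" using rl l0 word_inv_nth[of "(j' + k) mod l" r] by simp
    finally have e1: "s ! k = letter_inv (r ! (l - 1 - (j' + k) mod l))" .
    define y where "y = l - 1 - (j' + k) mod l"
    have yl: "y < l" unfolding y_def using l0 by simp
    have "P k = (y + l - j) mod l" unfolding P_def y_def A_def using ar3[OF j kl] by simp
    then have "(P k + j) mod l = y" using ar1[OF j(1) yl] by simp
    then have "s ! P k = r ! y" using Pl rl s_def nth_rotate[of "P k" r j] by (simp add: add.commute)
    then show ?thesis using e1 y_def s_def by simp
  qed
  show ?thesis
  proof (cases "\<exists>k1<L. \<exists>k2<L. P k1 = k2")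
    case True
    have "?S = {}"
    proof (rule ccontr)
      assume "?S \<noteq> {}"
      then obtain r where r: "r \<in> ?S" by blast
      have rl: "length r = l" and rc: "cyc r" using r unfolding CR_words_def by (auto simp: CR_cyc)
      have red: "reduced (rotate j r)" using cyc_rotate[OF rc] cyc_reduced by blast
      obtain k1 k2 where kk: "k1 < L" "k2 < L" "P k1 = k2" using True by blast
      have "\<exists>k<L. P k = k \<or> (Suc k < L \<and> P k = Suc k)"
      proof (cases "k1 \<le> k2")
        case True then show ?thesis using descent[OF Pstep True kk(2) kk(3)] by blast
      next
        case False
        have "P k2 = k1" using kk PP Ll by force
        then show ?thesis using descent[OF Pstep _ kk(1), of k2] False by simp
      qed
      then obtain k where k: "k < L" "P k = k \<or> (Suc k < L \<and> P k = Suc k)" by blast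
      have kc: "rotate j r ! k = letter_inv (rotate j r ! P k)" using key[OF r k(1)] .
      show False
      proof (cases "P k = k")
        case True then show False using kc by simp
      next
        case False
        then have sk: "Suc k < L" "P k = Suc k" using k by auto
        have "rotate j r ! Suc k \<noteq> letter_inv (rotate j r ! k)"
          using red sk(1) Ll rl unfolding reduced_def by simp
        then show False using kc sk(2) by simp
      qed
    qed
    then have "card ?S = 0" by (simp only: card.empty)
    then show ?thesis by simp
  next
    case False
    then have nd: "P k1 \<noteq> k2" if "k1 < L" "k2 < L" for k1 k2 using that by blast
    define D where "D = (\<lambda>k. max k (P k)) ` {..<L}"
    have inj: "inj_on (\<lambda>k. max k (P k)) {..<L}"
    proof (rule inj_onI)
      fix k1 k2 assume k: "k1 \<in> {..<L}" "k2 \<in> {..<L}" and e: "max k1 (P k1) = max k2 (P k2)"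
      have "k1 = k2 \<or> k1 = P k2 \<or> P k1 = k2 \<or> P k1 = P k2" using e by (auto simp: max_def split: if_splits)
      moreover have "P k1 = P k2 \<Longrightarrow> k1 = k2" using PP k Ll by (metis lessThan_iff less_trans)
      ultimately show "k1 = k2" using nd k by (metis lessThan_iff)
    qed
    have cD: "card D = L" unfolding D_def using card_image[OF inj] by simp
    have Dl: "D \<subseteq> {..<l}" unfolding D_def using Pl Ll by (auto simp: max_def)
    have gD: "\<forall>d\<in>D. P d < d"
    proof
      fix d assume "d \<in> D"
      then obtain k where k: "k < L" and d: "d = max k (P k)" unfolding D_def by auto
      have "P k \<noteq> k" using nd k by blast
      then show "P d < d"
      proof (cases "P k < k")
        case True then show ?thesis using d by (simp add: max_def)
      next
        case False
        then have "d = P k" "P d = k" using d PP k Ll \<open>P k \<noteq> k\<close> by (auto simp: max_def)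
        then show ?thesis using False \<open>P k \<noteq> k\<close> by simp
      qed
    qed
    have inj2: "inj_on (rotate j) ?S" by (auto simp: inj_on_def dest: rotate_inj)
    have sub: "rotate j ` ?S \<subseteq> RW m l D P (\<lambda>d x. letter_inv x)"
    proof
      fix x assume "x \<in> rotate j ` ?S"
      then obtain r where x: "x = rotate j r" and r: "r \<in> ?S" by auto
      have rr: "r \<in> CR_words m l" using r by simp
      note rp = rot_props[OF CR_props[OF rr], of j]
      have con: "\<forall>d\<in>D. d < l \<longrightarrow> x ! d = letter_inv (x ! P d)"
      proof (intro ballI impI)
        fix d assume "d \<in> D" "d < l"
        then obtain k where k: "k < L" and d: "d = max k (P k)" unfolding D_def by auto
        have kc: "x ! k = letter_inv (x ! P k)" using key[OF r k] x by simp
        show "x ! d = letter_inv (x ! P d)"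
        proof (cases "P k < k")
          case True then show ?thesis using d kc by (simp add: max_def)
        next
          case False
          then have "d = P k" "P d = k" using d PP k Ll by (auto simp: max_def)
          then show ?thesis using kc by (metis linv_inv)
        qed
      qed
      show "x \<in> RW m l D P (\<lambda>d x. letter_inv x)"
        unfolding RW_def mem_Collect_eq using rp x con by (intro conjI) auto
    qed
    have "card ?S * (2*m-1) ^ card D \<le> 2 * m * (2*m-1) ^ (l - 1)"
      by (rule inj_RW_bound[OF inj2 sub gD Dl]) (use l0 m in auto)
    then show ?thesis using cD by simp
  qed
qed

lemma CR_word_inv: assumes r: "r \<in> CR_words m l" shows "word_inv r \<in> CR_words m l"
proof -
  note cp = CR_props[OF r]
  have 1: "length (word_inv r) = l" using cp(1) by simp
  have 2: "cyclically_reduced (word_inv r)" using cyc_word_inv[OF cp(2)] CR_cyc by blast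
  have 3: "\<forall>a\<in>set (word_inv r). fst a < m" using cp(3) unfolding set_word_inv by simp
  show ?thesis unfolding CR_words_def mem_Collect_eq using 1 2 3 by blast
qed

lemma pair_bound:
  assumes ne: "(e, j) \<noteq> (e', j')" and j: "j < l" "j' < l" and L: "1 \<le> L" "2 * L \<le> l" and m: "m \<ge> 1"
  shows "card {r \<in> CR_words m l. seg L e j r = seg L e' j' r} * (2*m-1) ^ L \<le> 2 * m * (2*m-1) ^ (l - 1)"
proof -
  let ?B = "2 * m * (2*m-1) ^ (l - 1)"
  show ?thesis
  proof (cases e)
    case True
    show ?thesis
    proof (cases e')
      case True
      then have "j \<noteq> j'" using ne \<open>e\<close> by auto
      then show ?thesis using TT_bound[OF j(1) j(2) _ L m] \<open>e\<close> True
        by (simp add: seg_def signed_word_def)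
    next
      case False
      then show ?thesis using TF_bound[OF j L m] \<open>e\<close> by (simp add: seg_def signed_word_def)
    qed
  next
    case eF: False
    show ?thesis
    proof (cases e')
      case True
      have "{r \<in> CR_words m l. seg L e j r = seg L e' j' r} =
            {r \<in> CR_words m l. cyc_subword r j' L = cyc_subword (word_inv r) j L}"
        using eF True by (auto simp: seg_def signed_word_def)
      then show ?thesis using TF_bound[OF j(2) j(1) L m] by simp
    next
      case False
      then have jj: "j \<noteq> j'" using ne eF by auto
      let ?S = "{r \<in> CR_words m l. seg L e j r = seg L e' j' r}"
      let ?T = "{r \<in> CR_words m l. cyc_subword r j L = cyc_subword r j' L}"
      have "word_inv ` ?S \<subseteq> ?T"
      proof
        fix x assume "x \<in> word_inv ` ?S"
        then obtain r where x: "x = word_inv r" and r: "r \<in> CR_words m l" and sq: "seg L e j r = seg L e' j' r"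
          by blast
        have "cyc_subword x j L = cyc_subword x j' L" using sq eF False x by (simp add: seg_def signed_word_def)
        moreover have "x \<in> CR_words m l" using CR_word_inv[OF r] x by simp
        ultimately show "x \<in> ?T" by blast
      qed
      moreover have "inj_on word_inv ?S"
      proof (rule inj_onI)
        fix x y assume "word_inv x = word_inv y"
        then have "word_inv (word_inv x) = word_inv (word_inv y)" by simp
        then show "x = y" by simp
      qed
      moreover have "finite ?T" using finite_CR by simp
      ultimately have "card ?S \<le> card ?T" using card_image[of word_inv ?S] card_mono[of ?T "word_inv ` ?S"] by simp
      then have "card ?S * (2*m-1) ^ L \<le> card ?T * (2*m-1) ^ L" by simp
      also have "\<dots> \<le> ?B" using TT_bound[OF j jj L m] .
      finally show ?thesis .
    qed
  qed
qed


lemma prod_bound: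
  fixes C :: "nat \<Rightarrow> 'b set"
  assumes inj: "inj_on i {..<N}" and sub: "i ` {..<N} \<subseteq> {..<n}"
    and rest: "\<forall>p<n. p \<notin> i ` {..<N} \<longrightarrow> card (C p) = c"
    and bk: "\<forall>k<N. card (C (i k)) \<le> b k"
  shows "(\<Prod>p<n. card (C p)) \<le> (\<Prod>k<N. b k) * c ^ (n - N)"
proof -
  let ?I = "i ` {..<N}"
  have fin: "finite {..<n}" by simp
  have "(\<Prod>p<n. card (C p)) = (\<Prod>p\<in>{..<n} - ?I. card (C p)) * (\<Prod>p\<in>?I. card (C p))"
    by (rule prod.subset_diff[OF sub fin])
  also have "(\<Prod>p\<in>{..<n} - ?I. card (C p)) = (\<Prod>p\<in>{..<n} - ?I. c)"
    by (rule prod.cong) (use rest in auto)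
  also have "\<dots> = c ^ (n - N)"
  proof -
    have "card ({..<n} - ?I) = n - N" using card_Diff_subset[OF _ sub] card_image[OF inj] by simp
    then show ?thesis by simp
  qed
  also have "(\<Prod>p\<in>?I. card (C p)) = (\<Prod>k<N. card (C (i k)))"
    using prod.reindex[OF inj, of "\<lambda>p. card (C p)"] by simp
  also have "\<dots> \<le> (\<Prod>k<N. b k)" by (rule prod_mono) (use bk in auto)
  finally show ?thesis by (simp add: mult.commute)
qed

lemma tuples_eq: "relator_tuples m l n = {rs. length rs = n \<and> (\<forall>p<n. rs ! p \<in> CR_words m l)}"
  unfolding relator_tuples_def by (auto simp: all_set_conv_all_nth)

lemma card_tuples: "card (relator_tuples m l n) = card (CR_words m l) ^ n"
  unfolding tuples_eq card_lists_prod by simp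

definition Pairs :: "nat \<Rightarrow> (bool \<times> nat \<times> bool \<times> nat) set" where
  "Pairs l = {(e, j, e', j'). j < l \<and> j' < l \<and> (e, j) \<noteq> (e', j')}"

definition Aset :: "nat \<Rightarrow> nat \<Rightarrow> nat \<Rightarrow> nat \<Rightarrow> nat \<Rightarrow> bool \<times> nat \<times> bool \<times> nat \<Rightarrow> letter list list set" where
  "Aset m l n L i pr = {rs. length rs = n \<and> (\<forall>p<n. rs ! p \<in>
     (if p = i then {r \<in> CR_words m l. seg L (fst pr) (fst (snd pr)) r = seg L (fst (snd (snd pr))) (snd (snd (snd pr))) r}
      else CR_words m l))}"

definition Pats :: "nat \<Rightarrow> nat \<Rightarrow> nat \<Rightarrow> (nat \<Rightarrow> nat \<times> bool \<times> nat) set" where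
  "Pats N n l = {pat \<in> {..<N} \<rightarrow>\<^sub>E ({..<n} \<times> UNIV \<times> {..<l}). inj_on (fst \<circ> pat) {..<N}}"

definition Cset :: "nat \<Rightarrow> nat \<Rightarrow> nat \<Rightarrow> nat \<Rightarrow> (nat \<Rightarrow> nat \<times> bool \<times> nat) \<Rightarrow> letter list \<Rightarrow> nat \<Rightarrow> letter list set" where
  "Cset m l L N pat r0 p = {r \<in> CR_words m l. (p = fst (pat 0) \<longrightarrow> r = r0) \<and>
      (\<forall>k<N. fst (pat k) = p \<longrightarrow> seg L (fst (snd (pat k))) (snd (snd (pat k))) r =
                                  seg L (fst (snd (pat 0))) (snd (snd (pat 0))) r0)}"

definition Bset :: "nat \<Rightarrow> nat \<Rightarrow> nat \<Rightarrow> nat \<Rightarrow> nat \<Rightarrow> (nat \<Rightarrow> nat \<times> bool \<times> nat) \<Rightarrow> letter list \<Rightarrow> letter list list set" where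
  "Bset m l n L N pat r0 = {rs. length rs = n \<and> (\<forall>p<n. rs ! p \<in> Cset m l L N pat r0 p)}"

lemma finite_locations:
  assumes "rs \<in> relator_tuples m l n"
  shows "locations rs w \<subseteq> {..<n} \<times> UNIV \<times> {..<l}" "finite (locations rs w)"
proof -
  show s: "locations rs w \<subseteq> {..<n} \<times> UNIV \<times> {..<l}"
  proof
    fix x assume "x \<in> locations rs w"
    then obtain i e j where x: "x = (i, e, j)" "i < length rs" "j < length (rs ! i)" unfolding locations_def by blast
    have "length rs = n" "rs ! i \<in> CR_words m l" using assms x(2) unfolding tuples_eq by auto
    then show "x \<in> {..<n} \<times> UNIV \<times> {..<l}" using x unfolding CR_words_def by auto
  qed
  show "finite (locations rs w)" by (rule finite_subset[OF s]) auto
qed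

lemma cover:
  assumes rs: "rs \<in> relator_tuples m l n" and E: "repeated_word L N rs" and N: "N \<ge> 1"
  shows "(\<exists>i<n. \<exists>pr\<in>Pairs l. rs \<in> Aset m l n L i pr) \<or> (\<exists>pat\<in>Pats N n l. \<exists>r0\<in>CR_words m l. rs \<in> Bset m l n L N pat r0)"
proof -
  have len: "length rs = n" and rsp: "\<forall>p<n. rs ! p \<in> CR_words m l" using rs unfolding tuples_eq by auto
  obtain w where w: "length w = L" "card (locations rs w) \<ge> N" using E unfolding repeated_word_def by blast
  have locI: "i < n \<and> j < l \<and> seg L e j (rs ! i) = w" if "(i, e, j) \<in> locations rs w" for i e j
  proof -
    have i: "i < n" "j < length (rs ! i)" and sw: "cyc_subword (signed_word (rs ! i) e) j (length w) = w"
      using that len unfolding locations_def by auto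
    have "length (rs ! i) = l" using rsp i(1) unfolding CR_words_def by auto
    then show ?thesis using i sw w(1) by (simp add: seg_def)
  qed
  show ?thesis
  proof (cases "\<exists>i e j e' j'. (i, e, j) \<in> locations rs w \<and> (i, e', j') \<in> locations rs w \<and> (e, j) \<noteq> (e', j')")
    case True
    then obtain i e j e' j' where l1: "(i, e, j) \<in> locations rs w" and l2: "(i, e', j') \<in> locations rs w"
      and ne: "(e, j) \<noteq> (e', j')" by blast
    note a1 = locI[OF l1] and a2 = locI[OF l2]
    have "(e, j, e', j') \<in> Pairs l" using a1 a2 ne unfolding Pairs_def by auto
    moreover have "rs \<in> Aset m l n L i (e, j, e', j')"
      unfolding Aset_def using len rsp a1 a2 by auto
    ultimately show ?thesis using a1 by blast
  next
    case False
    have injf: "inj_on fst (locations rs w)"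
    proof (rule inj_onI)
      fix x y assume xy: "x \<in> locations rs w" "y \<in> locations rs w" "fst x = fst y"
      obtain i e j where x: "x = (i, e, j)" by (cases x) auto
      obtain i' e' j' where y: "y = (i', e', j')" by (cases y) auto
      have "i' = i" using xy(3) x y by simp
      then have "(i, e, j) \<in> locations rs w" "(i, e', j') \<in> locations rs w" using xy x y by auto
      then have "(e, j) = (e', j')" using False by blast
      then show "x = y" using x y \<open>i' = i\<close> by simp
    qed
    obtain Sub where Sub: "Sub \<subseteq> locations rs w" "card Sub = N"
      using obtain_subset_with_card_n[OF w(2)] by blast
    have finSub: "finite Sub" using Sub(1) finite_locations(2)[OF rs] finite_subset by blast
    obtain h where h: "bij_betw h {0..<card Sub} Sub" using ex_bij_betw_nat_finite[OF finSub] by blast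
    then have h': "bij_betw h {..<N} Sub" using Sub(2) by (simp add: atLeast0LessThan)
    define pat where "pat = restrict h {..<N}"
    have patin: "pat k \<in> locations rs w" if "k < N" for k
      using that h' Sub(1) unfolding pat_def bij_betw_def by auto
    have "pat \<in> Pats N n l"
      unfolding Pats_def
    proof (intro CollectI conjI)
      show "pat \<in> {..<N} \<rightarrow>\<^sub>E ({..<n} \<times> UNIV \<times> {..<l})"
        unfolding pat_def using patin[unfolded pat_def] finite_locations(1)[OF rs] by auto
      have "inj_on pat {..<N}" using h' unfolding pat_def bij_betw_def inj_on_def by auto
      moreover have "pat ` {..<N} \<subseteq> locations rs w" using patin by auto
      ultimately show "inj_on (fst \<circ> pat) {..<N}" using injf by (metis comp_inj_on inj_on_subset)
    qed
    moreover have "rs ! fst (pat 0) \<in> CR_words m l"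
    proof -
      obtain i e j where "pat 0 = (i, e, j)" by (cases "pat 0") auto
      then show ?thesis using locI patin[of 0] N rsp by auto
    qed
    moreover have "rs \<in> Bset m l n L N pat (rs ! fst (pat 0))"
      unfolding Bset_def Cset_def
    proof (intro CollectI conjI allI impI)
      show "length rs = n" using len .
      fix p assume p: "p < n"
      show "rs ! p \<in> CR_words m l" using rsp p by blast
      show "p = fst (pat 0) \<Longrightarrow> rs ! p = rs ! fst (pat 0)" by simp
      fix k assume k: "k < N" "fst (pat k) = p"
      obtain i e j where pk: "pat k = (i, e, j)" by (cases "pat k") auto
      obtain i0 e0 j0 where p0: "pat 0 = (i0, e0, j0)" by (cases "pat 0") auto
      have "seg L e j (rs ! i) = w" using locI patin[OF k(1)] pk by auto
      moreover have "seg L e0 j0 (rs ! i0) = w" using locI patin[of 0] N p0 by auto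
      ultimately show "seg L (fst (snd (pat k))) (snd (snd (pat k))) (rs ! p) =
            seg L (fst (snd (pat 0))) (snd (snd (pat 0))) (rs ! fst (pat 0))"
        using pk p0 k(2) by simp
    qed
    ultimately show ?thesis by blast
  qed
qed


lemma A_bound:
  assumes i: "i < n" and pr: "pr \<in> Pairs l" and L: "1 \<le> L" "2 * L \<le> l" and m: "m \<ge> 1"
  shows "card (Aset m l n L i pr) * (2*m-1) ^ L \<le> 2 * m * (2*m-1) ^ (l - 1) * card (CR_words m l) ^ (n - 1)"
proof -
  obtain e j e' j' where prd: "pr = (e, j, e', j')" by (cases pr) auto
  have ne: "(e, j) \<noteq> (e', j')" and j: "j < l" "j' < l" using pr prd unfolding Pairs_def by auto
  let ?PS = "{r \<in> CR_words m l. seg L e j r = seg L e' j' r}"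
  let ?C = "\<lambda>p. if p = i then ?PS else CR_words m l"
  have "card (Aset m l n L i pr) = (\<Prod>p<n. card (?C p))"
    unfolding Aset_def prd fst_conv snd_conv by (rule card_lists_prod)
  also have "\<dots> \<le> card ?PS * card (CR_words m l) ^ (n - 1)"
  proof -
    have a1: "inj_on (\<lambda>_. i) {..<1::nat}" by (simp add: inj_on_def)
    have a2: "(\<lambda>_. i) ` {..<1::nat} \<subseteq> {..<n}" using i by auto
    have a3: "\<forall>p<n. p \<notin> (\<lambda>_. i) ` {..<1::nat} \<longrightarrow> card (?C p) = card (CR_words m l)" by auto
    have a4: "\<forall>k<1::nat. card (?C ((\<lambda>_. i) k)) \<le> card ?PS" by auto
    show ?thesis using prod_bound[OF a1 a2 a3 a4] by simp
  qed
  finally have c1: "card (Aset m l n L i pr) \<le> card ?PS * card (CR_words m l) ^ (n - 1)" by simp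
  have c2: "card ?PS * (2*m-1) ^ L \<le> 2 * m * (2*m-1) ^ (l - 1)" using pair_bound[OF ne j L m] .
  have "card (Aset m l n L i pr) * (2*m-1) ^ L \<le> card ?PS * (2*m-1) ^ L * card (CR_words m l) ^ (n - 1)"
    using mult_le_mono1[OF c1, of "(2*m-1) ^ L"] by (simp add: ac_simps)
  also have "\<dots> \<le> 2 * m * (2*m-1) ^ (l - 1) * card (CR_words m l) ^ (n - 1)"
    using c2 by (rule mult_le_mono1)
  finally show ?thesis .
qed

lemma B_bound:
  assumes pat: "pat \<in> Pats N n l" and L: "1 \<le> L" "L \<le> l" and m: "m \<ge> 1" and N: "N \<ge> 1"
  shows "card (Bset m l n L N pat r0) * (2*m-1) ^ ((L - 1) * (N - 1))
       \<le> (2 * m * (2*m-1) ^ (l - 1)) ^ (N - 1) * card (CR_words m l) ^ (n - N)"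
proof -
  let ?K = "2 * m * (2*m-1) ^ (l - 1)"
  let ?c = "card (CR_words m l)"
  let ?i = "fst \<circ> pat"
  let ?u = "seg L (fst (snd (pat 0))) (snd (snd (pat 0))) r0"
  let ?S = "\<lambda>k. card {r \<in> CR_words m l. seg L (fst (snd (pat k))) (snd (snd (pat k))) r = ?u}"
  define b where "b k = (if k = 0 then 1 else ?S k)" for k
  have inj: "inj_on ?i {..<N}" and pin: "pat \<in> {..<N} \<rightarrow>\<^sub>E ({..<n} \<times> UNIV \<times> {..<l})"
    using pat unfolding Pats_def by auto
  have sub: "?i ` {..<N} \<subseteq> {..<n}" using pin by (auto simp: PiE_def Pi_def)
  have rest: "\<forall>p<n. p \<notin> ?i ` {..<N} \<longrightarrow> card (Cset m l L N pat r0 p) = ?c"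
  proof (intro allI impI)
    fix p assume "p < n" "p \<notin> ?i ` {..<N}"
    then have "p \<noteq> fst (pat 0)" "\<forall>k<N. fst (pat k) \<noteq> p" using N by force+
    then have "Cset m l L N pat r0 p = CR_words m l" unfolding Cset_def by auto
    then show "card (Cset m l L N pat r0 p) = ?c" by simp
  qed
  have bk: "\<forall>k<N. card (Cset m l L N pat r0 (?i k)) \<le> b k"
  proof (intro allI impI)
    fix k assume k: "k < N"
    show "card (Cset m l L N pat r0 (?i k)) \<le> b k"
    proof (cases "k = 0")
      case True
      have "Cset m l L N pat r0 (?i k) \<subseteq> {r0}" unfolding Cset_def using True by auto
      then have "card (Cset m l L N pat r0 (?i k)) \<le> card {r0}" by (rule card_mono[rotated]) simp
      then show ?thesis using True b_def by simp
    next
      case False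
      have "Cset m l L N pat r0 (?i k) \<subseteq> {r \<in> CR_words m l. seg L (fst (snd (pat k))) (snd (snd (pat k))) r = ?u}"
        unfolding Cset_def using k by auto
      then have "card (Cset m l L N pat r0 (?i k)) \<le> ?S k" by (rule card_mono[rotated]) (simp add: finite_CR)
      then show ?thesis using False b_def by simp
    qed
  qed
  have "card (Bset m l n L N pat r0) = (\<Prod>p<n. card (Cset m l L N pat r0 p))"
    unfolding Bset_def by (rule card_lists_prod)
  also have "\<dots> \<le> (\<Prod>k<N. b k) * ?c ^ (n - N)" by (rule prod_bound[OF inj sub rest bk])
  finally have c1: "card (Bset m l n L N pat r0) \<le> (\<Prod>k<N. b k) * ?c ^ (n - N)" .
  have pb: "(\<Prod>k<N. b k) = (\<Prod>k\<in>{1..<N}. ?S k)"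
  proof -
    have "{..<N} = insert 0 {1..<N}" using N by auto
    then have "(\<Prod>k<N. b k) = b 0 * (\<Prod>k\<in>{1..<N}. b k)" by simp
    also have "(\<Prod>k\<in>{1..<N}. b k) = (\<Prod>k\<in>{1..<N}. ?S k)" by (rule prod.cong) (auto simp: b_def)
    finally show ?thesis by (simp add: b_def)
  qed
  have "(\<Prod>k<N. b k) * (2*m-1) ^ ((L - 1) * (N - 1)) = (\<Prod>k\<in>{1..<N}. ?S k) * (\<Prod>k\<in>{1..<N}. (2*m-1) ^ (L - 1))"
    unfolding pb by (simp add: power_mult)
  also have "\<dots> = (\<Prod>k\<in>{1..<N}. ?S k * (2*m-1) ^ (L - 1))"
    by (rule prod.distrib[symmetric])
  also have "\<dots> \<le> (\<Prod>k\<in>{1..<N}. ?K)"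
    by (rule prod_mono) (use seg_bound[OF L m] in auto)
  also have "\<dots> = ?K ^ (N - 1)" by simp
  finally have c2: "(\<Prod>k<N. b k) * (2*m-1) ^ ((L - 1) * (N - 1)) \<le> ?K ^ (N - 1)" .
  have "card (Bset m l n L N pat r0) * (2*m-1) ^ ((L - 1) * (N - 1))
      \<le> (\<Prod>k<N. b k) * (2*m-1) ^ ((L - 1) * (N - 1)) * ?c ^ (n - N)"
    using mult_le_mono1[OF c1, of "(2*m-1) ^ ((L - 1) * (N - 1))"] by (simp add: ac_simps)
  also have "\<dots> \<le> ?K ^ (N - 1) * ?c ^ (n - N)" using c2 by (rule mult_le_mono1)
  finally show ?thesis .
qed


lemma finite_Pairs: "finite (Pairs l)" and card_Pairs: "card (Pairs l) \<le> 4 * l ^ 2"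
proof -
  have s: "Pairs l \<subseteq> UNIV \<times> {..<l} \<times> UNIV \<times> {..<l}" unfolding Pairs_def by auto
  have f: "finite ((UNIV::bool set) \<times> {..<l} \<times> (UNIV::bool set) \<times> {..<l})"
    by (intro finite_cartesian_product) auto
  show "finite (Pairs l)" using finite_subset[OF s f] .
  have "card (Pairs l) \<le> card ((UNIV::bool set) \<times> {..<l} \<times> (UNIV::bool set) \<times> {..<l})" using card_mono[OF f s] .
  also have "\<dots> = 4 * l ^ 2" by (simp add: card_cartesian_product power2_eq_square)
  finally show "card (Pairs l) \<le> 4 * l ^ 2" .
qed

lemma finite_Pats: "finite (Pats N n l)" and card_Pats: "card (Pats N n l) \<le> (2 * n * l) ^ N"
proof -
  have s: "Pats N n l \<subseteq> {..<N} \<rightarrow>\<^sub>E ({..<n} \<times> UNIV \<times> {..<l})" unfolding Pats_def by auto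
  have f: "finite ({..<N} \<rightarrow>\<^sub>E ({..<n} \<times> (UNIV::bool set) \<times> {..<l}))" by (rule finite_PiE) auto
  show "finite (Pats N n l)" using finite_subset[OF s f] .
  have "card (Pats N n l) \<le> card ({..<N} \<rightarrow>\<^sub>E ({..<n} \<times> (UNIV::bool set) \<times> {..<l}))" using card_mono[OF f s] .
  also have "\<dots> = (2 * n * l) ^ N" by (simp add: card_PiE card_cartesian_product ac_simps)
  finally show "card (Pats N n l) \<le> (2 * n * l) ^ N" .
qed

lemma Pats_le: "pat \<in> Pats N n l \<Longrightarrow> N \<le> n"
proof -
  assume "pat \<in> Pats N n l"
  then have inj: "inj_on (fst \<circ> pat) {..<N}" and pin: "pat \<in> {..<N} \<rightarrow>\<^sub>E ({..<n} \<times> UNIV \<times> {..<l})"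
    unfolding Pats_def by auto
  have "(fst \<circ> pat) ` {..<N} \<subseteq> {..<n}" using pin by (auto simp: PiE_def Pi_def)
  from card_inj_on_le[OF inj this] show "N \<le> n" by simp
qed

lemma Aset_sub: "Aset m l n L i pr \<subseteq> relator_tuples m l n"
  unfolding Aset_def tuples_eq by (auto split: if_splits)

lemma Bset_sub: "Bset m l n L N pat r0 \<subseteq> relator_tuples m l n"
proof
  fix rs assume "rs \<in> Bset m l n L N pat r0"
  then have 1: "length rs = n" and 2: "\<forall>p<n. rs ! p \<in> Cset m l L N pat r0 p" unfolding Bset_def by auto
  have 3: "Cset m l L N pat r0 p \<subseteq> CR_words m l" for p unfolding Cset_def by blast
  have 4: "\<forall>p<n. rs ! p \<in> CR_words m l"
  proof (intro allI impI)
    fix p assume "p < n"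
    show "rs ! p \<in> CR_words m l" using subsetD[OF 3 2[rule_format, OF \<open>p < n\<close>]] .
  qed
  show "rs \<in> relator_tuples m l n" unfolding tuples_eq mem_Collect_eq using 1 4 by (intro conjI)
qed

lemma finite_tuples: "finite (relator_tuples m l n)"
proof -
  have "relator_tuples m l n \<subseteq> {rs. set rs \<subseteq> CR_words m l \<and> length rs = n}"
    unfolding relator_tuples_def by auto
  moreover have "finite {rs. set rs \<subseteq> CR_words m l \<and> length rs = n}"
    using finite_lists_length_eq[OF finite_CR] by simp
  ultimately show ?thesis using finite_subset by blast
qed

lemma card_event_le:
  assumes N: "N \<ge> 1"
  shows "card {rs \<in> relator_tuples m l n. repeated_word L N rs}
     \<le> (\<Sum>i<n. \<Sum>pr\<in>Pairs l. card (Aset m l n L i pr)) +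
        (\<Sum>pat\<in>Pats N n l. \<Sum>r0\<in>CR_words m l. card (Bset m l n L N pat r0))"
proof -
  let ?UA = "\<Union>i<n. \<Union>pr\<in>Pairs l. Aset m l n L i pr"
  let ?UB = "\<Union>pat\<in>Pats N n l. \<Union>r0\<in>CR_words m l. Bset m l n L N pat r0"
  have sub: "{rs \<in> relator_tuples m l n. repeated_word L N rs} \<subseteq> ?UA \<union> ?UB"
  proof
    fix rs assume "rs \<in> {rs \<in> relator_tuples m l n. repeated_word L N rs}"
    then have a: "rs \<in> relator_tuples m l n" "repeated_word L N rs" by auto
    from cover[OF a N]
    show "rs \<in> ?UA \<union> ?UB"
    proof
      assume "\<exists>i<n. \<exists>pr\<in>Pairs l. rs \<in> Aset m l n L i pr"
      then obtain i pr where "i < n" "pr \<in> Pairs l" "rs \<in> Aset m l n L i pr" by blast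
      then have "rs \<in> ?UA" by blast
      then show ?thesis by (rule UnI1)
    next
      assume "\<exists>pat\<in>Pats N n l. \<exists>r0\<in>CR_words m l. rs \<in> Bset m l n L N pat r0"
      then obtain pat r0 where "pat \<in> Pats N n l" "r0 \<in> CR_words m l" "rs \<in> Bset m l n L N pat r0" by blast
      then have "rs \<in> ?UB" by blast
      then show ?thesis by (rule UnI2)
    qed
  qed
  have "?UA \<subseteq> relator_tuples m l n" using Aset_sub by (simp add: UN_subset_iff)
  moreover have "?UB \<subseteq> relator_tuples m l n" using Bset_sub by (simp add: UN_subset_iff)
  ultimately have "?UA \<union> ?UB \<subseteq> relator_tuples m l n" by (rule Un_least)
  then have fin: "finite (?UA \<union> ?UB)" by (rule finite_subset[OF _ finite_tuples])
  have "card {rs \<in> relator_tuples m l n. repeated_word L N rs} \<le> card (?UA \<union> ?UB)"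
    using card_mono[OF fin sub] .
  also have "\<dots> \<le> card ?UA + card ?UB" by (rule card_Un_le)
  also have "card ?UA \<le> (\<Sum>i<n. card (\<Union>pr\<in>Pairs l. Aset m l n L i pr))" by (rule card_UN_le) simp
  also have "\<dots> \<le> (\<Sum>i<n. \<Sum>pr\<in>Pairs l. card (Aset m l n L i pr))"
    by (rule sum_mono) (rule card_UN_le[OF finite_Pairs])
  also have "card ?UB \<le> (\<Sum>pat\<in>Pats N n l. card (\<Union>r0\<in>CR_words m l. Bset m l n L N pat r0))"
    by (rule card_UN_le[OF finite_Pats])
  also have "\<dots> \<le> (\<Sum>pat\<in>Pats N n l. \<Sum>r0\<in>CR_words m l. card (Bset m l n L N pat r0))"
    by (rule sum_mono) (rule card_UN_le[OF finite_CR])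
  finally show ?thesis by simp
qed


lemma prob_bound:
  assumes m: "m \<ge> 2" and l: "l \<ge> 2" and L: "1 \<le> L" "2 * L \<le> l" and N: "N \<ge> 1"
  shows "prob_event m l n (repeated_word L N)
     \<le> real n * (4 * real l ^ 2) * (2 * real m * real (2*m-1)) / real (2*m-1) ^ L
       + (2 * real n * real l) ^ N * (2 * real m * real (2*m-1)) ^ (N - 1) / real (2*m-1) ^ ((L - 1) * (N - 1))"
proof -
  define q where "q = real (2*m-1)"
  define c where "c = card (CR_words m l)"
  define cr where "cr = real c"
  define K where "K = 2 * m * (2*m-1) ^ (l - 1)"
  define Q where "Q = q ^ ((L - 1) * (N - 1))"
  have q1: "q \<ge> 1" unfolding q_def using m by simp
  have qpos: "q > 0" using q1 by simp
  have Qpos: "Q > 0" unfolding Q_def using qpos by simp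
  have m1: "m \<ge> 1" using m by simp
  have Ll: "L \<le> l" using L by simp
  have ccr: "q ^ (l - 2) \<le> cr" unfolding q_def cr_def c_def using CR_card[OF l m]
    by (metis of_nat_le_iff of_nat_power)
  have crpos: "cr > 0" using ccr qpos by (smt (verit) zero_less_power)
  have Kc: "real K \<le> 2 * real m * q * cr"
  proof -
    have "real K = 2 * real m * q * q ^ (l - 2)" unfolding K_def q_def using l m
      by (simp add: power_Suc[symmetric] Suc_diff_Suc numeral_2_eq_2 of_nat_diff)
    also have "\<dots> \<le> 2 * real m * q * cr" using ccr qpos by (intro mult_left_mono) auto
    finally show ?thesis .
  qed
  have x: "real K / cr \<le> 2 * real m * q" using Kc crpos by (simp add: divide_le_eq)
  have x0: "real K / cr \<ge> 0" using crpos by simp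
  let ?SA = "\<Sum>i<n. \<Sum>pr\<in>Pairs l. card (Aset m l n L i pr)"
  let ?SB = "\<Sum>pat\<in>Pats N n l. \<Sum>r0\<in>CR_words m l. card (Bset m l n L N pat r0)"
  have E: "real (card {rs \<in> relator_tuples m l n. repeated_word L N rs}) \<le> real ?SA + real ?SB"
    using card_event_le[OF N, of m l n L] by linarith
  have prob: "prob_event m l n (repeated_word L N) = real (card {rs \<in> relator_tuples m l n. repeated_word L N rs}) / cr ^ n"
    unfolding prob_event_def card_tuples cr_def c_def by simp
  have bA: "real (card (Aset m l n L i pr)) \<le> real K * cr ^ (n - 1) / q ^ L" if "i < n" "pr \<in> Pairs l" for i pr
  proof -
    have "real (card (Aset m l n L i pr)) * q ^ L \<le> real K * cr ^ (n - 1)"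
      using A_bound[OF that L m1] unfolding K_def q_def cr_def c_def
      by (metis of_nat_le_iff of_nat_mult of_nat_power)
    then show ?thesis using qpos by (simp add: le_divide_eq)
  qed
  have bA0: "real K * cr ^ (n - 1) / q ^ L \<ge> 0" using crpos qpos by simp
  have SA: "real ?SA \<le> real n * (4 * real l ^ 2) * (real K * cr ^ (n - 1) / q ^ L)"
  proof -
    have "real ?SA = (\<Sum>i<n. \<Sum>pr\<in>Pairs l. real (card (Aset m l n L i pr)))" by simp
    also have "\<dots> \<le> (\<Sum>i<n. real (card (Pairs l)) * (real K * cr ^ (n - 1) / q ^ L))"
      by (rule sum_mono, rule sum_bounded_above) (use bA in auto)
    also have "\<dots> = real n * (real (card (Pairs l)) * (real K * cr ^ (n - 1) / q ^ L))" by simp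
    also have "\<dots> \<le> real n * ((4 * real l ^ 2) * (real K * cr ^ (n - 1) / q ^ L))"
    proof -
      have "real (card (Pairs l)) \<le> 4 * real l ^ 2" using card_Pairs[of l]
        by (metis of_nat_le_iff of_nat_mult of_nat_numeral of_nat_power)
      then show ?thesis using bA0 by (intro mult_left_mono mult_right_mono) auto
    qed
    finally show ?thesis by (simp add: mult.assoc)
  qed
  have TA: "real ?SA / cr ^ n \<le> real n * (4 * real l ^ 2) * (2 * real m * q) / q ^ L"
  proof (cases "n = 0")
    case True then show ?thesis by simp
  next
    case False
    have "cr ^ n = cr * cr ^ (n - 1)" using False by (metis power_eq_if)
    then have "real n * (4 * real l ^ 2) * (real K * cr ^ (n - 1) / q ^ L) / cr ^ n
        = real n * (4 * real l ^ 2) * (real K / cr) / q ^ L" using crpos by (simp add: field_simps)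
    also have "\<dots> \<le> real n * (4 * real l ^ 2) * (2 * real m * q) / q ^ L"
      using x qpos by (intro divide_right_mono mult_left_mono) auto
    finally have "real n * (4 * real l ^ 2) * (real K * cr ^ (n - 1) / q ^ L) / cr ^ n
        \<le> real n * (4 * real l ^ 2) * (2 * real m * q) / q ^ L" .
    moreover have "real ?SA / cr ^ n \<le> real n * (4 * real l ^ 2) * (real K * cr ^ (n - 1) / q ^ L) / cr ^ n"
      using SA crpos by (intro divide_right_mono) auto
    ultimately show ?thesis by linarith
  qed
  have bB: "real (card (Bset m l n L N pat r0)) \<le> real K ^ (N - 1) * cr ^ (n - N) / Q" if "pat \<in> Pats N n l" for pat r0
  proof -
    have "real (card (Bset m l n L N pat r0)) * Q \<le> real K ^ (N - 1) * cr ^ (n - N)"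
      using B_bound[OF that L(1) Ll m1 N, of r0] unfolding K_def q_def cr_def c_def Q_def
      by (metis of_nat_le_iff of_nat_mult of_nat_power)
    then show ?thesis using Qpos by (simp add: le_divide_eq)
  qed
  have TB: "real ?SB / cr ^ n \<le> (2 * real n * real l) ^ N * (2 * real m * q) ^ (N - 1) / Q"
  proof (cases "Pats N n l = {}")
    case True then show ?thesis using Qpos qpos by simp
  next
    case False
    then obtain pat where "pat \<in> Pats N n l" by blast
    then have Nn: "N \<le> n" by (rule Pats_le)
    have bB0: "real K ^ (N - 1) * cr ^ (n - N) / Q \<ge> 0" using crpos Qpos by simp
    have "real ?SB = (\<Sum>pat\<in>Pats N n l. \<Sum>r0\<in>CR_words m l. real (card (Bset m l n L N pat r0)))" by simp
    also have "\<dots> \<le> (\<Sum>pat\<in>Pats N n l. cr * (real K ^ (N - 1) * cr ^ (n - N) / Q))"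
    proof (rule sum_mono)
      fix pat assume "pat \<in> Pats N n l"
      have "(\<Sum>r0\<in>CR_words m l. real (card (Bset m l n L N pat r0))) \<le> real (card (CR_words m l)) * (real K ^ (N - 1) * cr ^ (n - N) / Q)"
        by (rule sum_bounded_above) (use bB[OF \<open>pat \<in> Pats N n l\<close>] in auto)
      then show "(\<Sum>r0\<in>CR_words m l. real (card (Bset m l n L N pat r0))) \<le> cr * (real K ^ (N - 1) * cr ^ (n - N) / Q)"
        unfolding cr_def c_def .
    qed
    also have "\<dots> = real (card (Pats N n l)) * (cr * (real K ^ (N - 1) * cr ^ (n - N) / Q))" by simp
    also have "\<dots> \<le> (2 * real n * real l) ^ N * (cr * (real K ^ (N - 1) * cr ^ (n - N) / Q))"
    proof -
      have "real (card (Pats N n l)) \<le> (2 * real n * real l) ^ N" using card_Pats[of N n l]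
        by (metis of_nat_le_iff of_nat_mult of_nat_numeral of_nat_power)
      moreover have "0 \<le> cr * (real K ^ (N - 1) * cr ^ (n - N) / Q)" using bB0 crpos by (intro mult_nonneg_nonneg) auto
      ultimately show ?thesis by (rule mult_right_mono)
    qed
    finally have SB: "real ?SB \<le> (2 * real n * real l) ^ N * (cr * (real K ^ (N - 1) * cr ^ (n - N) / Q))" .
    have crn: "cr ^ n = cr ^ (N - 1) * (cr * cr ^ (n - N))"
    proof -
      have "n = (N - 1) + (1 + (n - N))" using Nn N by simp
      then show ?thesis by (metis power_add power_one_right)
    qed
    have "(2 * real n * real l) ^ N * (cr * (real K ^ (N - 1) * cr ^ (n - N) / Q)) / cr ^ n
        = (2 * real n * real l) ^ N * (real K / cr) ^ (N - 1) / Q"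
      unfolding crn using crpos by (simp add: field_simps power_divide)
    also have "\<dots> \<le> (2 * real n * real l) ^ N * (2 * real m * q) ^ (N - 1) / Q"
      using x x0 Qpos by (intro divide_right_mono mult_left_mono power_mono) auto
    finally have "(2 * real n * real l) ^ N * (cr * (real K ^ (N - 1) * cr ^ (n - N) / Q)) / cr ^ n
        \<le> (2 * real n * real l) ^ N * (2 * real m * q) ^ (N - 1) / Q" .
    moreover have "real ?SB / cr ^ n \<le> (2 * real n * real l) ^ N * (cr * (real K ^ (N - 1) * cr ^ (n - N) / Q)) / cr ^ n"
      using SB crpos by (intro divide_right_mono) auto
    ultimately show ?thesis by linarith
  qed
  have "prob_event m l n (repeated_word L N) \<le> (real ?SA + real ?SB) / cr ^ n"
    unfolding prob using E crpos by (intro divide_right_mono) auto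
  also have "\<dots> = real ?SA / cr ^ n + real ?SB / cr ^ n" by (simp add: add_divide_distrib)
  also have "\<dots> \<le> real n * (4 * real l ^ 2) * (2 * real m * q) / q ^ L
       + (2 * real n * real l) ^ N * (2 * real m * q) ^ (N - 1) / Q"
    using TA TB by linarith
  finally show ?thesis unfolding q_def Q_def .
qed


lemma lim1:
  fixes a q :: real and k :: nat
  assumes "a > 0" "q > 1"
  shows "((\<lambda>x::real. x ^ k * q powr (- a * x)) \<longlongrightarrow> 0) at_top"
  using assms by real_asymp

lemma lim_seq:
  fixes a q c :: real and k :: nat
  assumes "a > 0" "q > 1"
  shows "(\<lambda>l::nat. c * (real l ^ k * q powr (- a * real l))) \<longlonglongrightarrow> 0"
proof -
  have "(\<lambda>l::nat. real l ^ k * q powr (- a * real l)) \<longlonglongrightarrow> 0"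
    using filterlim_compose[OF lim1[OF assms] filterlim_real_sequentially] by (simp add: o_def)
  then show ?thesis using tendsto_mult_right_zero by blast
qed

theorem lemma8p11:
  fixes m N :: nat and d lam :: real
  assumes "m \<ge> 2" and "0 < d" and "d < lam" and "lam < 1/2"
    and "real N > lam / (lam - d)"
  shows "(\<lambda>l. prob_event m l (num_relators m d l)
            (repeated_word (nat \<lfloor>lam * real l\<rfloor>) N)) \<longlonglongrightarrow> 0"
proof -
  note m = assms(1) and d0 = assms(2) and dl = assms(3) and lh = assms(4) and Nb = assms(5)
  define q where "q = real (2*m-1)"
  have q1: "q > 1" unfolding q_def using m by simp
  have qpos: "q > 0" using q1 by simp
  have lam0: "lam > 0" using d0 dl by simp
  have NL: "real N * (lam - d) > lam" using Nb dl by (simp add: pos_divide_less_eq)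
  define b where "b = real N * (lam - d) - lam"
  have b0: "b > 0" unfolding b_def using NL by simp
  have N1: "N \<ge> 1"
  proof (rule ccontr)
    assume "\<not> N \<ge> 1" then have "N = 0" by simp
    then show False using NL lam0 by simp
  qed
  define C1 where "C1 = 8 * real m * q ^ 2"
  define C2 where "C2 = 2 ^ N * (2 * real m * q) ^ (N - 1) * q ^ (2 * (N - 1))"
  define u where "u l = C1 * (real l ^ 2 * q powr (- (lam - d) * real l)) + C2 * (real l ^ N * q powr (- b * real l))" for l :: nat
  have ulim: "u \<longlonglongrightarrow> 0"
  proof -
    have "(\<lambda>l::nat. C1 * (real l ^ 2 * q powr (- (lam - d) * real l))) \<longlonglongrightarrow> 0"
      by (rule lim_seq) (use dl q1 in auto)
    moreover have "(\<lambda>l::nat. C2 * (real l ^ N * q powr (- b * real l))) \<longlonglongrightarrow> 0"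
      by (rule lim_seq) (use b0 q1 in auto)
    ultimately show ?thesis unfolding u_def using tendsto_add_zero by blast
  qed
  obtain l0 :: nat where l0: "real l0 \<ge> 2 / lam" using real_arch_simple by blast
  have bound: "prob_event m l (num_relators m d l) (repeated_word (nat \<lfloor>lam * real l\<rfloor>) N) \<le> u l"
    if ll: "l \<ge> max 2 l0" for l
  proof -
    define L where "L = nat \<lfloor>lam * real l\<rfloor>"
    define n where "n = num_relators m d l"
    have l2: "l \<ge> 2" using ll by simp
    have lamL: "lam * real l \<ge> 2"
    proof -
      have "l0 \<le> l" using ll by simp
      then have "real l0 \<le> real l" by simp
      then have "real l \<ge> 2 / lam" using l0 by linarith
      then show ?thesis using lam0 by (simp add: divide_le_eq mult.commute)
    qed
    have Lr: "real L \<le> lam * real l" "real L \<ge> lam * real l - 1"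
      unfolding L_def using lamL by (simp_all add: of_nat_nat)
    have L1: "1 \<le> L"
    proof -
      have "real L \<ge> 1" using Lr lamL by linarith
      then show ?thesis by simp
    qed
    have L2: "2 * L \<le> l"
    proof -
      have "lam * real l \<le> (1/2) * real l" using lh by (intro mult_right_mono) auto
      then have "real (2 * L) \<le> real l" using Lr(1) by simp
      then show ?thesis by linarith
    qed
    have nb: "real n \<le> q powr (real l * d)"
    proof -
      have "(2 * real m - 1) = q" unfolding q_def using m by (simp add: of_nat_diff)
      then have "num_relators m d l = nat \<lfloor>q powr (real l * d)\<rfloor>" unfolding num_relators_def by simp
      then show ?thesis unfolding n_def using qpos
        by (simp add: of_nat_nat)
    qed
    have n0: "real n \<ge> 0" by simp
    note PB = prob_bound[OF m l2 L1 L2 N1, of n]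
    have qL: "real (2*m-1) ^ L = q powr real L" unfolding q_def using qpos q_def by (simp add: powr_realpow)
    have qL2: "q powr (lam * real l - 1) \<le> q powr real L" using Lr(2) q1 by (simp add: powr_mono)
    have T1: "real n * (4 * real l ^ 2) * (2 * real m * real (2*m-1)) / real (2*m-1) ^ L
        \<le> C1 * (real l ^ 2 * q powr (- (lam - d) * real l))"
    proof -
      have "real n * (4 * real l ^ 2) * (2 * real m * real (2*m-1)) / real (2*m-1) ^ L
          = real n * (8 * real m * q * real l ^ 2) / q powr real L" unfolding qL q_def by simp
      also have "\<dots> \<le> q powr (real l * d) * (8 * real m * q * real l ^ 2) / q powr (lam * real l - 1)"
        using nb qL2 qpos by (intro frac_le mult_right_mono mult_nonneg_nonneg) auto
      also have "\<dots> = 8 * real m * q * real l ^ 2 * (q powr (real l * d) / q powr (lam * real l - 1))"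
        by simp
      also have "q powr (real l * d) / q powr (lam * real l - 1) = q * q powr (- (lam - d) * real l)"
      proof -
        have "q powr (real l * d) / q powr (lam * real l - 1) = q powr (real l * d - (lam * real l - 1))"
          by (simp add: powr_diff)
        also have "real l * d - (lam * real l - 1) = 1 + (- (lam - d) * real l)" by (simp add: algebra_simps)
        also have "q powr \<dots> = q * q powr (- (lam - d) * real l)" using qpos by (simp add: powr_add)
        finally show ?thesis .
      qed
      finally show ?thesis unfolding C1_def by (simp add: power2_eq_square mult_ac)
    qed
    have T2: "(2 * real n * real l) ^ N * (2 * real m * real (2*m-1)) ^ (N - 1) / real (2*m-1) ^ ((L - 1) * (N - 1))
        \<le> C2 * (real l ^ N * q powr (- b * real l))"
    proof -
      have e1: "q ^ ((L - 1) * (N - 1)) = q powr ((real L - 1) * (real N - 1))"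
        using qpos L1 N1 by (simp add: powr_realpow[symmetric] of_nat_diff)
      have e2: "q powr ((lam * real l - 2) * (real N - 1)) \<le> q powr ((real L - 1) * (real N - 1))"
        using Lr(2) q1 N1 by (intro powr_mono mult_right_mono) auto
      have e3: "(2 * real n * real l) ^ N \<le> (2 * q powr (real l * d) * real l) ^ N"
        using nb by (intro power_mono mult_right_mono) auto
      have e4: "(2 * q powr (real l * d) * real l) ^ N = 2 ^ N * real l ^ N * q powr (real N * real l * d)"
        using qpos by (simp add: power_mult_distrib powr_realpow[symmetric] powr_powr[symmetric] mult_ac)
          (simp add: powr_powr mult_ac)
      have "(2 * real n * real l) ^ N * (2 * real m * real (2*m-1)) ^ (N - 1) / real (2*m-1) ^ ((L - 1) * (N - 1))
          \<le> (2 * q powr (real l * d) * real l) ^ N * (2 * real m * q) ^ (N - 1) / q powr ((lam * real l - 2) * (real N - 1))"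
        unfolding q_def[symmetric] unfolding e1 using e2 e3 qpos by (intro frac_le mult_right_mono mult_nonneg_nonneg) auto
      also have "\<dots> = 2 ^ N * (2 * real m * q) ^ (N - 1) * real l ^ N *
           (q powr (real N * real l * d) / q powr ((lam * real l - 2) * (real N - 1)))"
        unfolding e4 by simp
      also have "q powr (real N * real l * d) / q powr ((lam * real l - 2) * (real N - 1))
          = q ^ (2 * (N - 1)) * q powr (- b * real l)"
      proof -
        have "q powr (real N * real l * d) / q powr ((lam * real l - 2) * (real N - 1))
           = q powr (real N * real l * d - (lam * real l - 2) * (real N - 1))" by (simp add: powr_diff)
        also have "real N * real l * d - (lam * real l - 2) * (real N - 1) = real (2 * (N - 1)) + (- b * real l)"
          unfolding b_def using N1 by (simp add: algebra_simps of_nat_diff)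
        also have "q powr \<dots> = q powr real (2 * (N - 1)) * q powr (- b * real l)"
          by (rule powr_add)
        also have "q powr real (2 * (N - 1)) = q ^ (2 * (N - 1))" using qpos by (rule powr_realpow)
        finally show ?thesis .
      qed
      finally show ?thesis unfolding C2_def by (simp add: mult_ac)
    qed
    show ?thesis using PB T1 T2 unfolding u_def L_def[symmetric] n_def[symmetric] by linarith
  qed
  have lower: "prob_event m l (num_relators m d l) (repeated_word (nat \<lfloor>lam * real l\<rfloor>) N) \<ge> 0" for l
    unfolding prob_event_def by simp
  show ?thesis
  proof (rule tendsto_sandwich[OF _ _ tendsto_const ulim])
    show "\<forall>\<^sub>F l in sequentially. 0 \<le> prob_event m l (num_relators m d l) (repeated_word (nat \<lfloor>lam * real l\<rfloor>) N)"
      using lower by simp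
    show "\<forall>\<^sub>F l in sequentially. prob_event m l (num_relators m d l) (repeated_word (nat \<lfloor>lam * real l\<rfloor>) N) \<le> u l"
      using bound by (intro eventually_sequentiallyI) blast
  qed
qed


end
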